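(* Let $p(\cdot\mid z)$, $z\in\mathcal{Z}^{\times}$, be an additive energy distribution (AED) family with energy map $E:\mathbb{R}^n\to\mathbb{R}^{md}$, i.e. $p(x\mid z)=\frac{1}{\mathbb{Z}(z)}\exp(-\langle\sigma(z),E(x)\rangle)$ with $\mathbb{Z}(z)=\int\exp(-\langle\sigma(z),E(x)\rangle)\,dx<\infty$. Let $\hat E:\mathbb{R}^n\to\mathbb{R}^{md}$ be another map with $\hat{\mathbb{Z}}(z)=\int\exp(-\langle\sigma(z),\hat E(x)\rangle)\,dx<\infty$ for all $z\in\mathcal{Z}^{\times}$, and define the learned AED $\hat p(x\mid z)=\frac{1}{\hat{\mathbb{Z}}(z)}\exp(-\langle\sigma(z),\hat E(x)\rangle)$ for all $z\in\mathcal{Z}^{\times}$. If $\hat p(\cdot\mid z)=p(\cdot\mid z)$ for all $z\in\mathcal{Z}^{\mathsf{train}}$, then $\hat p(\cdot\mid z')=p(\cdot\mid z')$ for all $z'\in\mathsf{DAff}(\mathcal{Z}^{\mathsf{train}})$.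
   Context: An attribute vector is $z=(z_1,\dots,z_m)$ with each $z_i\in\{1,\dots,d\}$; $\mathcal{Z}=\{1,\dots,d\}^m$. For $z\in\mathcal{Z}$, $\sigma(z)\in\{0,1\}^{md}$ denotes the concatenation of the one-hot encodings of $z_1,\dots,z_m$. For a finite set $\mathcal{A}=\{z^{(1)},\dots,z^{(k)}\}\subseteq\mathcal{Z}$, its discrete affine hull is $\mathsf{DAff}(\mathcal{A})=\{z\in\mathcal{Z}:\exists\alpha\in\mathbb{R}^k,\ \sum_i\alpha_i=1,\ \sigma(z)=\sum_{i=1}^k\alpha_i\sigma(z^{(i)})\}$. There is a training distribution $p(x,z)=p(z)p(x\mid z)$ on $\mathbb{R}^n\times\mathcal{Z}$; $\mathcal{Z}^{\mathsf{train}}$ is the support of $p(z)$, $\mathcal{Z}_i^{\mathsf{train}}$ is the set of values taken by the $i$-th coordinate on $\mathcal{Z}^{\mathsf{train}}$, and $\mathcal{Z}^{\times}=\mathcal{Z}_1^{\mathsf{train}}\times\cdots\times\mathcal{Z}_m^{\mathsf{train}}$. The densities $p(\cdot\mid z)$ are assumed to have support $\mathbb{R}^n$ for every $z\in\mathcal{Z}^{\times}$. *)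

theory Defs
  imports "HOL-Analysis.Analysis"
begin

text \<open>Attribute vectors z = (z_1,...,z_m) with z_i in {1..d} are represented as lists of
  length m (position i < m holds z_{i+1}).\<close>
definition attrs :: "nat \<Rightarrow> nat \<Rightarrow> nat list set" where
  "attrs m d = {z. length z = m \<and> set z \<subseteq> {1..d}}"

text \<open>sigma(z): concatenated one-hot encodings, indexed by (i,k) with i < m, k in {1..d}.\<close>
definition onehot :: "nat list \<Rightarrow> nat \<Rightarrow> nat \<Rightarrow> real" where
  "onehot z i k = (if i < length z \<and> z ! i = k then 1 else 0)"

text \<open>Inner product <sigma(z), e> for e in R^{md} (indexed by (i,k)).\<close>
definition energy :: "nat \<Rightarrow> nat \<Rightarrow> nat list \<Rightarrow> (nat \<Rightarrow> nat \<Rightarrow> real) \<Rightarrow> real" where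
  "energy m d z e = (\<Sum>i<m. \<Sum>k\<in>{1..d}. onehot z i k * e i k)"

definition DAff :: "nat \<Rightarrow> nat \<Rightarrow> nat list set \<Rightarrow> nat list set" where
  "DAff m d A = {z \<in> attrs m d. \<exists>\<alpha> :: nat list \<Rightarrow> real. (\<Sum>a\<in>A. \<alpha> a) = 1 \<and>
      (\<forall>i<m. \<forall>k\<in>{1..d}. onehot z i k = (\<Sum>a\<in>A. \<alpha> a * onehot a i k))}"

definition Zcross :: "nat \<Rightarrow> nat list set \<Rightarrow> nat list set" where
  "Zcross m Ztr = {z. length z = m \<and> (\<forall>i<m. z ! i \<in> (\<lambda>a. a ! i) ` Ztr)}"

definition aed :: "nat \<Rightarrow> nat \<Rightarrow> ('a::euclidean_space \<Rightarrow> nat \<Rightarrow> nat \<Rightarrow> real) \<Rightarrow> nat list \<Rightarrow> 'a \<Rightarrow> real" where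
  "aed m d E z x = exp (- energy m d z (E x)) /
     integral\<^sup>L lborel (\<lambda>y. exp (- energy m d z (E y)))"

end

theory Submission
  imports Defs
begin

lemma energy_lin:
  assumes "\<forall>i<m. \<forall>k\<in>{1..d}. onehot z i k = (\<Sum>a\<in>A. \<alpha> a * onehot a i k)"
  shows "energy m d z e = (\<Sum>a\<in>A. \<alpha> a * energy m d a e)"
proof -
  have "energy m d z e = (\<Sum>i<m. \<Sum>k\<in>{1..d}. \<Sum>a\<in>A. \<alpha> a * (onehot a i k * e i k))"
    unfolding energy_def using assms
    by (intro sum.cong refl) (simp add: sum_distrib_right mult.assoc)
  also have "\<dots> = (\<Sum>i<m. \<Sum>a\<in>A. \<Sum>k\<in>{1..d}. \<alpha> a * (onehot a i k * e i k))"
    by (rule sum.cong[OF refl], rule sum.swap)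
  also have "\<dots> = (\<Sum>a\<in>A. \<Sum>i<m. \<Sum>k\<in>{1..d}. \<alpha> a * (onehot a i k * e i k))"
    by (rule sum.swap)
  also have "\<dots> = (\<Sum>a\<in>A. \<alpha> a * energy m d a e)"
    unfolding energy_def sum_distrib_left by (rule refl)
  finally show ?thesis .
qed

lemma pos_int:
  fixes f :: "'a::euclidean_space \<Rightarrow> real"
  assumes "integrable lborel f" "\<And>x. f x > 0"
  shows "integral\<^sup>L lborel f > 0"
proof -
  have ge: "integral\<^sup>L lborel f \<ge> 0" using assms by (simp add: less_imp_le)
  have "integral\<^sup>L lborel f \<noteq> 0"
  proof
    assume "integral\<^sup>L lborel f = 0"
    then have "AE x in lborel. f x = 0"
      using integral_nonneg_eq_0_iff_AE[OF assms(1)] assms(2) by (simp add: less_imp_le)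
    then have "AE (x::'a) in lborel. False" proof eventually_elim
      case (elim x) then show False using assms(2)[of x] by simp
    qed
    then have "ae_filter (lborel::'a measure) = bot" using trivial_limit_def by blast
    then have "emeasure (lborel::'a measure) UNIV = 0" by (simp add: ae_filter_eq_bot_iff)
    then show False by (simp add: emeasure_lborel_UNIV)
  qed
  with ge show ?thesis by simp
qed

theorem theorem1:
  fixes m d :: nat
    and Ztr :: "nat list set"
    and E Ehat :: "'a::euclidean_space \<Rightarrow> nat \<Rightarrow> nat \<Rightarrow> real"
  assumes Ztr_sub: "Ztr \<subseteq> attrs m d"
    and Ztr_ne: "Ztr \<noteq> {}"
    and E_int: "\<forall>z\<in>Zcross m Ztr. integrable lborel (\<lambda>x. exp (- energy m d z (E x)))"
    and Ehat_int: "\<forall>z\<in>Zcross m Ztr. integrable lborel (\<lambda>x. exp (- energy m d z (Ehat x)))"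
    and fit: "\<forall>z\<in>Ztr. \<forall>x. aed m d Ehat z x = aed m d E z x"
  shows "\<forall>z'\<in>DAff m d Ztr. \<forall>x. aed m d Ehat z' x = aed m d E z' x"
proof (intro ballI allI)
  fix z' x
  assume z': "z' \<in> DAff m d Ztr"
  define Z where "Z z = integral\<^sup>L lborel (\<lambda>y. exp (- energy m d z (E y)))" for z
  define Zh where "Zh z = integral\<^sup>L lborel (\<lambda>y. exp (- energy m d z (Ehat y)))" for z
  define c where "c z = ln (Z z / Zh z)" for z
  have key: "energy m d a (Ehat y) - energy m d a (E y) = c a" if a: "a \<in> Ztr" for a y
  proof -
    have la: "length a = m" using a Ztr_sub by (auto simp: attrs_def)
    have "a \<in> Zcross m Ztr" unfolding Zcross_def using la a by (blast intro: rev_image_eqI)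
    then have i1: "integrable lborel (\<lambda>x. exp (- energy m d a (E x)))"
      and i2: "integrable lborel (\<lambda>x. exp (- energy m d a (Ehat x)))"
      using E_int Ehat_int by blast+
    have Zp: "Z a > 0" unfolding Z_def by (rule pos_int[OF i1]) (rule exp_gt_zero)
    have Zhp: "Zh a > 0" unfolding Zh_def by (rule pos_int[OF i2]) (rule exp_gt_zero)
    have "aed m d Ehat a y = aed m d E a y" using fit a by blast
    then have "exp (- energy m d a (Ehat y)) / Zh a = exp (- energy m d a (E y)) / Z a"
      by (simp only: aed_def Z_def Zh_def)
    then have "exp (- energy m d a (Ehat y)) * Z a = exp (- energy m d a (E y)) * Zh a"
      using frac_eq_eq[of "Zh a" "Z a"] Zp Zhp by simp
    then have "ln (exp (- energy m d a (Ehat y)) * Z a) = ln (exp (- energy m d a (E y)) * Zh a)"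
      by (rule arg_cong)
    then have "- energy m d a (Ehat y) + ln (Z a) = - energy m d a (E y) + ln (Zh a)"
      by (simp only: ln_mult_pos[OF exp_gt_zero Zp] ln_mult_pos[OF exp_gt_zero Zhp] ln_exp)
    then show ?thesis unfolding c_def ln_divide_pos[OF Zp Zhp] by linarith
  qed
  from z' obtain \<alpha> where al: "\<forall>i<m. \<forall>k\<in>{1..d}. onehot z' i k = (\<Sum>a\<in>Ztr. \<alpha> a * onehot a i k)"
    unfolding DAff_def by auto
  define C where "C = (\<Sum>a\<in>Ztr. \<alpha> a * c a)"
  have eq: "energy m d z' (Ehat y) = energy m d z' (E y) + C" for y
  proof -
    have "energy m d z' (Ehat y) - energy m d z' (E y)
        = (\<Sum>a\<in>Ztr. \<alpha> a * (energy m d a (Ehat y) - energy m d a (E y)))"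
      unfolding energy_lin[OF al] by (simp add: sum_subtractf right_diff_distrib)
    also have "\<dots> = C" unfolding C_def using key by simp
    finally show ?thesis by simp
  qed
  have ex: "exp (- energy m d z' (Ehat y)) = exp (- energy m d z' (E y)) * exp (- C)" for y
    unfolding eq by (simp add: exp_add[symmetric])
  show "aed m d Ehat z' x = aed m d E z' x"
  proof -
    have "integral\<^sup>L lborel (\<lambda>y. exp (- energy m d z' (E y)) * exp (- C))
       = integral\<^sup>L lborel (\<lambda>y. exp (- energy m d z' (E y))) * exp (- C)"
      by (rule integral_mult_left_zero)
    then show ?thesis unfolding aed_def ex
      by (simp only: mult_divide_mult_cancel_right exp_not_eq_zero not_False_eq_True)
  qed
qed

end
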